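(* Let $Z$ be the twistor space of $\mathbb H^4$ and let $\mathbb Z_2^3$ act on $\mathbb H^4$ (ball model, coordinates $x_1,\dots,x_4$ centred at a point $p$) by the maps $(x_1,x_2,x_3,x_4)\mapsto(\pm x_1,\pm x_2,\pm x_3,\pm x_4)$ with an even number of sign changes; let $\mathbb Z_2^3$ act on $Z$ by the induced action. For $i\neq j$ let $\Pi_{ij}\subset\mathbb H^4$ be the totally geodesic coordinate $2$-plane in the $(x_i,x_j)$ directions; each $\Pi_{ij}$ has two twistor lifts to $Z$, giving twelve surfaces in $Z$. Then the points of $Z$ with non-trivial stabilizer are of two types: (1) there are exactly $6$ points with stabilizer $\mathbb Z_2^2$; they lie on the twistor fibre $t^{-1}(p)$ over $p$, arranged as the vertices of an octahedron, and each pair of opposite vertices forms an orbit of the $\mathbb Z_2^3$-action; (2) the remaining points with non-trivial stabilizer have stabilizer $\mathbb Z_2$; they form the union of the fibre $t^{-1}(p)$ and the twelve lifted surfaces, with the six points of (1) removed.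
   Context: The twistor space of $\mathbb H^4$ (with a fixed orientation) is $Z=\mathrm{SO}_0(4,1)/\mathrm U(2)$, the coadjoint orbit of $\mathrm{SO}_0(4,1)$ through an element $\begin{pmatrix}0&0\\0&J_0\end{pmatrix}$ with $J_0\in\mathfrak{so}(4)$, $J_0^2=-1$. The natural fibration $t\colon Z\to \mathrm{SO}_0(4,1)/\mathrm{SO}(4)=\mathbb H^4$ identifies the fibre $t^{-1}(q)\cong S^2$ with the set of linear complex structures on $T_q\mathbb H^4$ orthogonal for the hyperbolic metric and inducing the given orientation. An isometry of $\mathbb H^4$ preserving orientation acts on $Z$ naturally. The twistor lift of an oriented totally geodesic plane $\Pi\subset\mathbb H^4$ is the surface $\{J\in t^{-1}(q): q\in\Pi,\ T_q\Pi \text{ is a } J\text{-complex line, with orientation induced by } J \text{ agreeing with that of } \Pi\}$; the two orientations of $\Pi$ give two disjoint lifts. *)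

theory Defs
  imports "HOL-Analysis.Analysis"
begin

text \<open>Ball model of hyperbolic 4-space, centred at p = 0; points are q :: real^4 with norm q < 1.
  Tangent spaces are identified with real^4; linear endomorphisms with real^4^4.\<close>

definition hyp_ball :: "(real^4) set" where
  "hyp_ball = {q. norm q < 1}"

definition hyp_metric :: "real^4 \<Rightarrow> real^4 \<Rightarrow> real^4 \<Rightarrow> real" where
  "hyp_metric q u v = 4 / (1 - (norm q)\<^sup>2)\<^sup>2 * (u \<bullet> v)"

definition cols4 :: "real^4 \<Rightarrow> real^4 \<Rightarrow> real^4 \<Rightarrow> real^4 \<Rightarrow> real^4^4" where
  "cols4 a b c d = (\<chi> i j. (if j = 1 then a else if j = 2 then b else if j = 3 then c else d) $ i)"

text \<open>J induces the standard orientation: some (equivalently every) complex basis (v, Jv, w, Jw)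
  is positively oriented.\<close>
definition induces_orientation :: "real^4^4 \<Rightarrow> bool" where
  "induces_orientation J \<longleftrightarrow> (\<exists>v w. det (cols4 v (J *v v) w (J *v w)) > 0)"

definition twistor_at :: "real^4 \<Rightarrow> real^4^4 \<Rightarrow> bool" where
  "twistor_at q J \<longleftrightarrow> J ** J = - mat 1
     \<and> (\<forall>u v. hyp_metric q (J *v u) (J *v v) = hyp_metric q u v)
     \<and> induces_orientation J"

definition twistor_space :: "((real^4) \<times> (real^4^4)) set" where
  "twistor_space = {(q, J). q \<in> hyp_ball \<and> twistor_at q J}"

definition twistor_proj :: "(real^4) \<times> (real^4^4) \<Rightarrow> real^4" where
  "twistor_proj z = fst z"

definition twistor_fibre :: "real^4 \<Rightarrow> ((real^4) \<times> (real^4^4)) set" where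
  "twistor_fibre q = {z \<in> twistor_space. twistor_proj z = q}"

definition sign_group :: "(real^4^4) set" where
  "sign_group = {D. \<exists>s :: 4 \<Rightarrow> real. (\<forall>i. s i = 1 \<or> s i = -1)
       \<and> even (card {i. s i = -1}) \<and> D = (\<chi> i j. if i = j then s i else 0)}"

text \<open>Induced action of an isometry fixing p (with differential D) on Z.\<close>
definition twistor_act :: "real^4^4 \<Rightarrow> (real^4) \<times> (real^4^4) \<Rightarrow> (real^4) \<times> (real^4^4)" where
  "twistor_act D z = (D *v fst z, D ** snd z ** matrix_inv D)"

definition stabilizer :: "(real^4) \<times> (real^4^4) \<Rightarrow> (real^4^4) set" where
  "stabilizer z = {D \<in> sign_group. twistor_act D z = z}"

definition orbit :: "(real^4) \<times> (real^4^4) \<Rightarrow> ((real^4) \<times> (real^4^4)) set" where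
  "orbit z = {twistor_act D z | D. D \<in> sign_group}"

text \<open>Totally geodesic plane through p spanned by orthonormal u, v (a flat disc in the ball model).\<close>
definition geod_plane :: "real^4 \<Rightarrow> real^4 \<Rightarrow> (real^4) set" where
  "geod_plane u v = hyp_ball \<inter> span {u, v}"

text \<open>Twistor lift of the plane through p spanned by orthonormal u, v, oriented by (u, v):
  the tangent plane span{u,v} is a J-complex line, and the orientation (u, Ju) induced by J
  agrees with (u, v).\<close>
definition twistor_lift :: "real^4 \<Rightarrow> real^4 \<Rightarrow> ((real^4) \<times> (real^4^4)) set" where
  "twistor_lift u v = {(q, J) \<in> twistor_space. q \<in> geod_plane u v
      \<and> J *v u \<in> span {u, v} \<and> J *v v \<in> span {u, v} \<and> (J *v u) \<bullet> v > 0}"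

text \<open>The twelve lifted surfaces: coordinate planes Pi_ij with both orientations.\<close>
definition twelve_surfaces :: "((real^4) \<times> (real^4^4)) set" where
  "twelve_surfaces = (\<Union>i j. if i \<noteq> j then twistor_lift (axis i 1) (axis j 1) else {})"

end

theory Submission imports Defs begin

lemma det_4:
  "det (A::'a::comm_ring_1^4^4) = A$1$1 * A$2$2 * A$3$3 * A$4$4 + A$1$1 * A$2$3 * A$3$4 * A$4$2 + A$1$1 * A$2$4 * A$3$2 * A$4$3 + A$1$2 * A$2$1 * A$3$4 * A$4$3 + A$1$2 * A$2$3 * A$3$1 * A$4$4 + A$1$2 * A$2$4 * A$3$3 * A$4$1 + A$1$3 * A$2$1 * A$3$2 * A$4$4 + A$1$3 * A$2$2 * A$3$4 * A$4$1 + A$1$3 * A$2$4 * A$3$1 * A$4$2 + A$1$4 * A$2$1 * A$3$3 * A$4$2 + A$1$4 * A$2$2 * A$3$1 * A$4$3 + A$1$4 * A$2$3 * A$3$2 * A$4$1 - (A$1$1 * A$2$2 * A$3$4 * A$4$3 + A$1$1 * A$2$3 * A$3$2 * A$4$4 + A$1$1 * A$2$4 * A$3$3 * A$4$2 + A$1$2 * A$2$1 * A$3$3 * A$4$4 + A$1$2 * A$2$3 * A$3$4 * A$4$1 + A$1$2 * A$2$4 * A$3$1 * A$4$3 + A$1$3 * A$2$1 * A$3$4 * A$4$2 + A$1$3 * A$2$2 * A$3$1 * A$4$4 + A$1$3 * A$2$4 * A$3$2 * A$4$1 + A$1$4 * A$2$1 * A$3$2 * A$4$3 + A$1$4 * A$2$2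 * A$3$3 * A$4$1 + A$1$4 * A$2$3 * A$3$1 * A$4$2)"
proof -
  have f1: "finite {2::4, 3, 4}" "1 \<notin> {2::4, 3, 4}" by auto
  have f2: "finite {3::4, 4}" "2 \<notin> {3::4, 4}" by auto
  have f3: "finite {4::4}" "3 \<notin> {4::4}" by auto
  show ?thesis
    unfolding det_def UNIV_4
    unfolding sum_over_permutations_insert[OF f1]
    unfolding sum_over_permutations_insert[OF f2]
    unfolding sum_over_permutations_insert[OF f3]
    unfolding permutes_sing
    by (simp add: sign_swap_id permutation_swap_id sign_compose permutation_compose sign_id swap_id_eq algebra_simps)
qed

definition skm :: "real \<Rightarrow> real \<Rightarrow> real \<Rightarrow> real \<Rightarrow> real \<Rightarrow> real \<Rightarrow> real^4^4" where
  "skm a b c d e f = (\<chi> i j.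
     if i = 1 then (if j = 2 then a else if j = 3 then b else if j = 4 then c else 0)
     else if i = 2 then (if j = 1 then -a else if j = 3 then d else if j = 4 then e else 0)
     else if i = 3 then (if j = 1 then -b else if j = 2 then -d else if j = 4 then f else 0)
     else (if j = 1 then -c else if j = 2 then -e else if j = 3 then -f else 0))"

lemma skm_neg: "- skm a b c d e f = skm (-a) (-b) (-c) (-d) (-e) (-f)"
  unfolding skm_def by (simp add: vec_eq_iff forall_4)

lemma skm_eq: "skm a b c d e f = skm a' b' c' d' e' f' \<longleftrightarrow>
   a = a' \<and> b = b' \<and> c = c' \<and> d = d' \<and> e = e' \<and> f = f'"
  unfolding skm_def by (auto simp: vec_eq_iff forall_4)

lemma skm_mv: "skm a b c d e f *v v =
   (\<chi> i. if i = 1 then a * v$2 + b * v$3 + c * v$4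
         else if i = 2 then -a * v$1 + d * v$3 + e * v$4
         else if i = 3 then -b * v$1 - d * v$2 + f * v$4
         else -c * v$1 - e * v$2 - f * v$3)"
  unfolding skm_def by (simp add: vec_eq_iff forall_4 matrix_vector_mult_def sum_4)

lemma cols4_nth: "cols4 a b c d $ i $ j = (if j = 1 then a else if j = 2 then b else if j = 3 then c else d) $ i"
  unfolding cols4_def by simp

lemma anti1_det: "det (cols4 v ((skm 1 0 0 0 0 (-1)) *v v) w ((skm 1 0 0 0 0 (-1)) *v w)) = - ((v$2*w$3 - v$1*w$4 - v$3*w$2 + v$4*w$1)^2 + (v$2*w$4 + v$1*w$3 - v$3*w$1 - v$4*w$2)^2)"
  by (simp add: det_4 cols4_nth skm_mv power2_eq_square algebra_simps)

lemma anti1: "\<not> induces_orientation (skm 1 0 0 0 0 (-1))"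
  unfolding induces_orientation_def anti1_det
  by (simp add: not_less add_nonneg_nonneg)

lemma anti2_det: "det (cols4 v ((skm (-1) 0 0 0 0 1) *v v) w ((skm (-1) 0 0 0 0 1) *v w)) = - ((v$1*w$4 - v$2*w$3 - v$4*w$1 + v$3*w$2)^2 + (v$1*w$3 + v$2*w$4 - v$4*w$2 - v$3*w$1)^2)"
  by (simp add: det_4 cols4_nth skm_mv power2_eq_square algebra_simps)

lemma anti2: "\<not> induces_orientation (skm (-1) 0 0 0 0 1)"
  unfolding induces_orientation_def anti2_det
  by (simp add: not_less add_nonneg_nonneg)

lemma anti3_det: "det (cols4 v ((skm 0 1 0 0 1 0) *v v) w ((skm 0 1 0 0 1 0) *v w)) = - ((v$3*w$4 - v$1*w$2 - v$4*w$3 + v$2*w$1)^2 + (v$3*w$2 + v$1*w$4 - v$4*w$1 - v$2*w$3)^2)"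
  by (simp add: det_4 cols4_nth skm_mv power2_eq_square algebra_simps)

lemma anti3: "\<not> induces_orientation (skm 0 1 0 0 1 0)"
  unfolding induces_orientation_def anti3_det
  by (simp add: not_less add_nonneg_nonneg)

lemma anti4_det: "det (cols4 v ((skm 0 (-1) 0 0 (-1) 0) *v v) w ((skm 0 (-1) 0 0 (-1) 0) *v w)) = - ((v$1*w$2 - v$3*w$4 - v$2*w$1 + v$4*w$3)^2 + (v$1*w$4 + v$3*w$2 - v$2*w$3 - v$4*w$1)^2)"
  by (simp add: det_4 cols4_nth skm_mv power2_eq_square algebra_simps)

lemma anti4: "\<not> induces_orientation (skm 0 (-1) 0 0 (-1) 0)"
  unfolding induces_orientation_def anti4_det
  by (simp add: not_less add_nonneg_nonneg)

lemma anti5_det: "det (cols4 v ((skm 0 0 1 (-1) 0 0) *v v) w ((skm 0 0 1 (-1) 0 0) *v w)) = - ((v$4*w$2 - v$1*w$3 - v$2*w$4 + v$3*w$1)^2 + (v$4*w$3 + v$1*w$2 - v$2*w$1 - v$3*w$4)^2)"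
  by (simp add: det_4 cols4_nth skm_mv power2_eq_square algebra_simps)

lemma anti5: "\<not> induces_orientation (skm 0 0 1 (-1) 0 0)"
  unfolding induces_orientation_def anti5_det
  by (simp add: not_less add_nonneg_nonneg)

lemma anti6_det: "det (cols4 v ((skm 0 0 (-1) 1 0 0) *v v) w ((skm 0 0 (-1) 1 0 0) *v w)) = - ((v$1*w$3 - v$4*w$2 - v$3*w$1 + v$2*w$4)^2 + (v$1*w$2 + v$4*w$3 - v$3*w$4 - v$2*w$1)^2)"
  by (simp add: det_4 cols4_nth skm_mv power2_eq_square algebra_simps)

lemma anti6: "\<not> induces_orientation (skm 0 0 (-1) 1 0 0)"
  unfolding induces_orientation_def anti6_det
  by (simp add: not_less add_nonneg_nonneg)

definition mk :: "real \<Rightarrow> real \<Rightarrow> real \<Rightarrow> real \<Rightarrow> 4 \<Rightarrow> real" where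
  "mk a b c d = (\<lambda>i. if i = 1 then a else if i = 2 then b else if i = 3 then c else d)"

lemma mk_simps[simp]: "mk a b c d 1 = a" "mk a b c d 2 = b" "mk a b c d 3 = c" "mk a b c d 4 = d"
  by (simp_all add: mk_def)

lemma mk_eq[simp]: "mk a b c d = mk a' b' c' d' \<longleftrightarrow> a = a' \<and> b = b' \<and> c = c' \<and> d = d'"
  by (auto simp: fun_eq_iff forall_4)

lemma mk_self: "s = mk (s 1) (s 2) (s 3) (s 4)"
  using exhaust_4 by (auto simp: fun_eq_iff mk_def)

definition dg :: "(4 \<Rightarrow> real) \<Rightarrow> real^4^4" where
  "dg s = (\<chi> i j. if i = j then s i else 0)"

definition SL :: "(4 \<Rightarrow> real) list" where
  "SL = [mk 1 1 1 1, mk (-1) (-1) (-1) (-1), mk (-1) (-1) 1 1, mk 1 1 (-1) (-1),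
         mk (-1) 1 (-1) 1, mk 1 (-1) 1 (-1), mk (-1) 1 1 (-1), mk 1 (-1) (-1) 1]"

lemma card_4: "card {i::4. P i} = (if P 1 then 1 else 0) + (if P 2 then 1 else 0) + (if P 3 then 1 else 0) + (if P 4 then 1 else 0)"
proof -
  have "card {i::4. P i} = (\<Sum>i\<in>{i\<in>UNIV. P i}. 1)" by simp
  also have "\<dots> = (\<Sum>i\<in>UNIV. if P i then 1 else 0)" by (rule sum.inter_filter) simp
  finally show ?thesis by (simp add: sum_4)
qed

lemma sign_group_SL: "sign_group = dg ` set SL"
proof
  show "sign_group \<subseteq> dg ` set SL"
  proof
    fix D assume "D \<in> sign_group"
    then obtain s where s: "\<forall>i. s i = 1 \<or> s i = -1" "even (card {i. s i = -1})" "D = dg s"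
      unfolding sign_group_def dg_def by blast
    have "s \<in> set SL"
      using s(1,2) mk_self[of s] unfolding forall_4 card_4 SL_def
      by (elim conjE disjE) (simp_all)
    with s(3) show "D \<in> dg ` set SL" by blast
  qed
next
  show "dg ` set SL \<subseteq> sign_group"
    unfolding sign_group_def SL_def dg_def
    by (auto simp: forall_4 card_4 mk_def)
qed
lemma dg_mv: "dg s *v q = (\<chi> i. s i * q $ i)"
  unfolding dg_def by (simp add: vec_eq_iff matrix_vector_mult_def sum_4 forall_4)

lemma dg_conj: "dg s ** J ** dg t = (\<chi> i j. s i * J $ i $ j * t j)"
  unfolding dg_def by (simp add: vec_eq_iff matrix_matrix_mult_def sum_4 forall_4)

lemma dg_inj: "inj dg"
proof
  fix s t assume "dg s = dg t"
  then have "\<And>i. (dg s) $ i $ i = (dg t) $ i $ i" by simp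
  then show "s = t" by (simp add: dg_def fun_eq_iff)
qed

lemma SL_pm: "s \<in> set SL \<Longrightarrow> s i * s i = 1"
  unfolding SL_def mk_def by auto

lemma dg_sq: "s \<in> set SL \<Longrightarrow> dg s ** dg s = mat 1"
  using SL_pm[of s] unfolding dg_def
  by (simp add: vec_eq_iff matrix_matrix_mult_def sum_4 forall_4 mat_def)

lemma dg_inv: assumes "s \<in> set SL" shows "matrix_inv (dg s) = dg s"
proof -
  let ?D = "dg s"
  have ex: "?D ** ?D = mat 1 \<and> ?D ** ?D = mat 1" using dg_sq[OF assms] by simp
  have "?D ** matrix_inv ?D = mat 1 \<and> matrix_inv ?D ** ?D = mat 1"
    unfolding matrix_inv_def by (rule someI[of _ ?D]) (rule ex)
  then have "?D ** (?D ** matrix_inv ?D) = ?D" by simp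
  then show ?thesis by (simp add: matrix_mul_assoc dg_sq[OF assms])
qed

definition stabcond :: "(4 \<Rightarrow> real) \<Rightarrow> real^4 \<Rightarrow> real^4^4 \<Rightarrow> bool" where
  "stabcond s q J \<longleftrightarrow> (\<forall>i. s i * q $ i = q $ i) \<and> (\<forall>i j. s i * J $ i $ j * s j = J $ i $ j)"

lemma stab_eq: "stabilizer (q, J) = dg ` {s \<in> set SL. stabcond s q J}"
proof -
  have "\<And>s. s \<in> set SL \<Longrightarrow> twistor_act (dg s) (q, J) = (q, J) \<longleftrightarrow> stabcond s q J"
    by (simp add: twistor_act_def dg_inv dg_mv dg_conj stabcond_def vec_eq_iff)
  then show ?thesis
    unfolding stabilizer_def sign_group_SL by auto
qed

lemma length_filter_sum: "length (filter P xs) = sum_list (map (\<lambda>x. if P x then 1 else 0) xs)"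
  by (induction xs) auto

lemma distinct_SL: "distinct SL"
  unfolding SL_def by simp

definition B1 :: "real^4^4 \<Rightarrow> bool" where
  "B1 J \<longleftrightarrow> J$1$3 = 0 \<and> J$1$4 = 0 \<and> J$2$3 = 0 \<and> J$2$4 = 0 \<and> J$3$1 = 0 \<and> J$4$1 = 0 \<and> J$3$2 = 0 \<and> J$4$2 = 0"
definition B2 :: "real^4^4 \<Rightarrow> bool" where
  "B2 J \<longleftrightarrow> J$1$2 = 0 \<and> J$1$4 = 0 \<and> J$3$2 = 0 \<and> J$3$4 = 0 \<and> J$2$1 = 0 \<and> J$4$1 = 0 \<and> J$2$3 = 0 \<and> J$4$3 = 0"
definition B3 :: "real^4^4 \<Rightarrow> bool" where
  "B3 J \<longleftrightarrow> J$1$2 = 0 \<and> J$1$3 = 0 \<and> J$4$2 = 0 \<and> J$4$3 = 0 \<and> J$2$1 = 0 \<and> J$3$1 = 0 \<and> J$2$4 = 0 \<and> J$3$4 = 0"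

lemma card_stab: "card (stabilizer (q, J)) =
   1 + (if q$1 = 0 \<and> q$2 = 0 \<and> q$3 = 0 \<and> q$4 = 0 then 1 else 0)
   + (if B1 J \<and> q$1 = 0 \<and> q$2 = 0 then 1 else 0) + (if B1 J \<and> q$3 = 0 \<and> q$4 = 0 then 1 else 0)
   + (if B2 J \<and> q$1 = 0 \<and> q$3 = 0 then 1 else 0) + (if B2 J \<and> q$2 = 0 \<and> q$4 = 0 then 1 else 0)
   + (if B3 J \<and> q$1 = 0 \<and> q$4 = 0 then 1 else 0) + (if B3 J \<and> q$2 = 0 \<and> q$3 = 0 then 1 else 0)"
proof -
  have "card (stabilizer (q, J)) = card {s \<in> set SL. stabcond s q J}"
    unfolding stab_eq by (rule card_image) (meson dg_inj inj_on_subset subset_UNIV)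
  also have "\<dots> = card (set (filter (\<lambda>s. stabcond s q J) SL))" by simp
  also have "\<dots> = length (filter (\<lambda>s. stabcond s q J) SL)"
    by (rule distinct_card) (simp add: distinct_SL)
  also have "\<dots> = sum_list (map (\<lambda>s. if stabcond s q J then 1 else 0) SL)"
    by (rule length_filter_sum)
  finally show ?thesis
    unfolding SL_def by (simp add: stabcond_def forall_4 B1_def B2_def B3_def conj_ac)
qed
lemma mat_mul_neg: "(A::real^4^4) ** (- B) = - (A ** B)"
  by (simp add: vec_eq_iff matrix_matrix_mult_def sum_negf)

lemma TS_facts:
  assumes "(q, J) \<in> twistor_space"
  shows "J ** J = - mat 1" "transpose J = - J" "induces_orientation J"
proof -
  have q: "norm q < 1" and t: "twistor_at q J"
    using assms unfolding twistor_space_def hyp_ball_def by auto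
  show JJ: "J ** J = - mat 1" and "induces_orientation J"
    using t unfolding twistor_at_def by auto
  have "norm q ^ 2 < 1" using q by (simp add: power_less_one_iff abs_less_iff)
  then have c: "4 / (1 - (norm q)\<^sup>2)\<^sup>2 \<noteq> (0::real)" by simp
  have "\<And>u v. (J *v u) \<bullet> (J *v v) = u \<bullet> v"
    using t c unfolding twistor_at_def hyp_metric_def by auto
  then have "orthogonal_transformation ((*v) J)"
    unfolding orthogonal_transformation_def by (simp add: matrix_vector_mul_linear)
  then have "orthogonal_matrix J"
    using orthogonal_transformation_matrix[of "(*v) J"] by simp
  then have TJ: "transpose J ** J = mat 1" unfolding orthogonal_matrix_def by simp
  have "transpose J = transpose J ** (J ** (- J))"
    by (simp add: mat_mul_neg JJ)
  also have "\<dots> = - J"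
    by (simp add: matrix_mul_assoc TJ mat_mul_neg)
  finally show "transpose J = - J" .
qed

lemma TS_skew: "(q, J) \<in> twistor_space \<Longrightarrow> J $ i $ j = - J $ j $ i"
  proof -
  assume "(q, J) \<in> twistor_space"
  then have "transpose J $ j $ i = (- J) $ j $ i" using TS_facts(2) by simp
  then show ?thesis by (simp add: transpose_def)
qed

lemma TS_sq: "(q, J) \<in> twistor_space \<Longrightarrow>
   J$i$1 * J$1$j + J$i$2 * J$2$j + J$i$3 * J$3$j + J$i$4 * J$4$j = (if i = j then -1 else 0)"
proof -
  assume "(q, J) \<in> twistor_space"
  then have "(J ** J) $ i $ j = (- mat 1 :: real^4^4) $ i $ j" using TS_facts(1) by simp
  then show ?thesis by (simp add: matrix_matrix_mult_def sum_4 mat_def)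
qed

lemma sq_neg: "(x::real) * x = -1 \<Longrightarrow> False"
  by (smt (verit) zero_le_square)

lemma TS_one_B:
  assumes "(q, J) \<in> twistor_space"
  shows "\<not> (B1 J \<and> B2 J)" "\<not> (B1 J \<and> B3 J)" "\<not> (B2 J \<and> B3 J)"
proof -
  have s: "J$1$1 * J$1$1 + J$1$2 * J$2$1 + J$1$3 * J$3$1 + J$1$4 * J$4$1 = -1"
    using TS_sq[OF assms, of 1 1] by simp
  have "0 \<le> J$1$1 * J$1$1" by simp
  then show "\<not> (B1 J \<and> B2 J)" "\<not> (B1 J \<and> B3 J)" "\<not> (B2 J \<and> B3 J)"
    using s sq_neg unfolding B1_def B2_def B3_def by auto
qed
lemma TS_form: "(q, J) \<in> twistor_space \<Longrightarrow> J = skm (J$1$2) (J$1$3) (J$1$4) (J$2$3) (J$2$4) (J$3$4)"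
proof -
  assume a: "(q, J) \<in> twistor_space"
  have d: "J$i$i = 0" for i using TS_skew[OF a, of i i] by simp
  have o: "J$2$1 = - J$1$2" "J$3$1 = - J$1$3" "J$4$1 = - J$1$4" "J$3$2 = - J$2$3" "J$4$2 = - J$2$4" "J$4$3 = - J$3$4"
    using TS_skew[OF a] by blast+
  show ?thesis unfolding skm_def by (simp add: vec_eq_iff forall_4 d o)
qed

lemma TS_rows:
  assumes "(q, J) \<in> twistor_space"
  shows "(J$1$2)^2 + (J$1$3)^2 + (J$1$4)^2 = 1" "(J$1$2)^2 + (J$2$3)^2 + (J$2$4)^2 = 1"
    "(J$1$3)^2 + (J$2$3)^2 + (J$3$4)^2 = 1"
proof -
  have d: "J$i$i = 0" for i using TS_skew[OF assms, of i i] by simp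
  have o: "J$2$1 = - J$1$2" "J$3$1 = - J$1$3" "J$4$1 = - J$1$4" "J$3$2 = - J$2$3" "J$4$2 = - J$2$4" "J$4$3 = - J$3$4"
    using TS_skew[OF assms] by blast+
  have r1: "J$1$1 * J$1$1 + J$1$2 * J$2$1 + J$1$3 * J$3$1 + J$1$4 * J$4$1 = -1"
    using TS_sq[OF assms, of 1 1] by simp
  have r2: "J$2$1 * J$1$2 + J$2$2 * J$2$2 + J$2$3 * J$3$2 + J$2$4 * J$4$2 = -1"
    using TS_sq[OF assms, of 2 2] by simp
  have r3: "J$3$1 * J$1$3 + J$3$2 * J$2$3 + J$3$3 * J$3$3 + J$3$4 * J$4$3 = -1"
    using TS_sq[OF assms, of 3 3] by simp
  show "(J$1$2)^2 + (J$1$3)^2 + (J$1$4)^2 = 1" "(J$1$2)^2 + (J$2$3)^2 + (J$2$4)^2 = 1"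
    "(J$1$3)^2 + (J$2$3)^2 + (J$3$4)^2 = 1"
    using r1 r2 r3 unfolding d o by (simp_all add: power2_eq_square)
qed

lemma sq1: "(x::real)^2 = 1 \<Longrightarrow> x = 1 \<or> x = -1"
  by (simp add: power2_eq_1_iff)

definition "JJ1 = skm (-1) 0 0 0 0 (-1)"
definition "JJ2 = skm 0 (-1) 0 0 1 0"
definition "JJ3 = skm 0 0 (-1) (-1) 0 0"

lemma class1:
  assumes "(q, J) \<in> twistor_space" "B1 J" shows "J = JJ1 \<or> J = - JJ1"
proof -
  obtain x y where xy: "x = J$1$2" "y = J$3$4" by blast
  have f: "J = skm x 0 0 0 0 y" using TS_form[OF assms(1)] assms(2) xy unfolding B1_def by simp
  have a: "x = 1 \<or> x = -1" "y = 1 \<or> y = -1"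
    using TS_rows[OF assms(1)] assms(2) xy unfolding B1_def by (auto intro!: sq1)
  have o: "induces_orientation (skm x 0 0 0 0 y)" using TS_facts(3)[OF assms(1)] f by simp
  from a o show ?thesis unfolding f JJ1_def skm_neg using anti1 anti2 by auto
qed

lemma class2:
  assumes "(q, J) \<in> twistor_space" "B2 J" shows "J = JJ2 \<or> J = - JJ2"
proof -
  obtain x y where xy: "x = J$1$3" "y = J$2$4" by blast
  have f: "J = skm 0 x 0 0 y 0" using TS_form[OF assms(1)] assms(2) xy unfolding B2_def by simp
  have a: "x = 1 \<or> x = -1" "y = 1 \<or> y = -1"
    using TS_rows[OF assms(1)] assms(2) xy unfolding B2_def by (auto intro!: sq1)
  have o: "induces_orientation (skm 0 x 0 0 y 0)" using TS_facts(3)[OF assms(1)] f by simp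
  from a o show ?thesis unfolding f JJ2_def skm_neg using anti3 anti4 by auto
qed

lemma class3:
  assumes "(q, J) \<in> twistor_space" "B3 J" shows "J = JJ3 \<or> J = - JJ3"
proof -
  obtain x y where xy: "x = J$1$4" "y = J$2$3" by blast
  have f: "J = skm 0 0 x y 0 0" using TS_form[OF assms(1)] assms(2) xy unfolding B3_def by simp
  have a: "x = 1 \<or> x = -1" "y = 1 \<or> y = -1"
    using TS_rows[OF assms(1)] assms(2) xy unfolding B3_def by (auto intro!: sq1)
  have o: "induces_orientation (skm 0 0 x y 0 0)" using TS_facts(3)[OF assms(1)] f by simp
  from a o show ?thesis unfolding f JJ3_def skm_neg using anti5 anti6 by auto
qed

lemma span_axes:
  assumes ij: "i \<noteq> j"
  shows "(x::real^4) \<in> span {axis i 1, axis j 1} \<longleftrightarrow> (\<forall>k. k \<noteq> i \<and> k \<noteq> j \<longrightarrow> x$k = 0)"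
proof
  assume "x \<in> span {axis i 1, axis j 1}"
  then obtain a b where "x - a *\<^sub>R axis i 1 = b *\<^sub>R axis j 1"
    by (auto simp: span_breakdown_eq span_singleton)
  then have "x = a *\<^sub>R axis i 1 + b *\<^sub>R axis j 1" by (simp add: algebra_simps)
  then show "\<forall>k. k \<noteq> i \<and> k \<noteq> j \<longrightarrow> x$k = 0" by (simp add: axis_def)
next
  assume h: "\<forall>k. k \<noteq> i \<and> k \<noteq> j \<longrightarrow> x$k = 0"
  have "x - (x$i) *\<^sub>R axis i 1 = (x$j) *\<^sub>R axis j 1"
    using h ij by (auto simp: vec_eq_iff axis_def)
  then show "x \<in> span {axis i 1, axis j 1}"
    by (auto simp: span_breakdown_eq span_singleton)
qed

lemma lift_iff:
  assumes ij: "i \<noteq> j"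
  shows "(q, J) \<in> twistor_lift (axis i 1) (axis j 1) \<longleftrightarrow> (q, J) \<in> twistor_space \<and>
    (\<forall>k. k \<noteq> i \<and> k \<noteq> j \<longrightarrow> q$k = 0 \<and> J$k$i = 0 \<and> J$k$j = 0) \<and> J$j$i > 0"
proof -
  have ci: "J *v axis i 1 = column i J" "J *v axis j 1 = column j J"
    by (simp_all add: matrix_vector_mult_basis)
  show ?thesis
    unfolding twistor_lift_def geod_plane_def
    using span_axes[OF ij]
    by (auto simp: twistor_space_def column_def inner_axis matrix_vector_mult_basis)
qed
lemma ex_4: "(\<exists>i::4. P i) \<longleftrightarrow> P 1 \<or> P 2 \<or> P 3 \<or> P 4"
  by (metis exhaust_4)

definition Tc :: "real^4 \<Rightarrow> real^4^4 \<Rightarrow> bool" where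
  "Tc q J \<longleftrightarrow> (B1 J \<and> (q$1 = 0 \<and> q$2 = 0 \<or> q$3 = 0 \<and> q$4 = 0))
     \<or> (B2 J \<and> (q$1 = 0 \<and> q$3 = 0 \<or> q$2 = 0 \<and> q$4 = 0))
     \<or> (B3 J \<and> (q$1 = 0 \<and> q$4 = 0 \<or> q$2 = 0 \<and> q$3 = 0))"

lemma TS_nz:
  assumes "(q, J) \<in> twistor_space"
  shows "B1 J \<Longrightarrow> J$1$2 \<noteq> 0 \<and> J$3$4 \<noteq> 0" "B2 J \<Longrightarrow> J$1$3 \<noteq> 0 \<and> J$2$4 \<noteq> 0"
    "B3 J \<Longrightarrow> J$1$4 \<noteq> 0 \<and> J$2$3 \<noteq> 0"
proof -
  have d: "J$i$i = 0" for i using TS_skew[OF assms, of i i] by simp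
  have o: "J$2$1 = - J$1$2" "J$3$1 = - J$1$3" "J$4$1 = - J$1$4" "J$3$2 = - J$2$3" "J$4$2 = - J$2$4" "J$4$3 = - J$3$4"
    using TS_skew[OF assms] by blast+
  note r = TS_rows[OF assms]
  show "B1 J \<Longrightarrow> J$1$2 \<noteq> 0 \<and> J$3$4 \<noteq> 0" "B2 J \<Longrightarrow> J$1$3 \<noteq> 0 \<and> J$2$4 \<noteq> 0"
    "B3 J \<Longrightarrow> J$1$4 \<noteq> 0 \<and> J$2$3 \<noteq> 0"
    using r unfolding B1_def B2_def B3_def o by auto
qed

definition Lc :: "real^4 \<Rightarrow> real^4^4 \<Rightarrow> 4 \<Rightarrow> 4 \<Rightarrow> bool" where
  "Lc q J i j \<longleftrightarrow> (\<forall>k. k \<noteq> i \<and> k \<noteq> j \<longrightarrow> q$k = 0 \<and> J$k$i = 0 \<and> J$k$j = 0) \<and> J$j$i > 0"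

lemma pair12:
  assumes T: "(q, J) \<in> twistor_space"
  shows "Lc q J 1 2 \<or> Lc q J 2 1 \<longleftrightarrow> B1 J \<and> q$3 = 0 \<and> q$4 = 0"
proof -
  have o: "J$1$2 = - J$2$1" "J$1$3 = - J$3$1" "J$1$4 = - J$4$1" "J$2$3 = - J$3$2" "J$2$4 = - J$4$2" "J$3$4 = - J$4$3"
    using TS_skew[OF T] by blast+
  have nz: "B1 J \<Longrightarrow> J$1$2 \<noteq> 0"
    using TS_nz[OF T] o by auto
  show ?thesis using nz unfolding Lc_def forall_4 B1_def B2_def B3_def o
    by (auto simp: neg_less_0_iff_less)
qed

lemma pair34:
  assumes T: "(q, J) \<in> twistor_space"
  shows "Lc q J 3 4 \<or> Lc q J 4 3 \<longleftrightarrow> B1 J \<and> q$1 = 0 \<and> q$2 = 0"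
proof -
  have o: "J$1$2 = - J$2$1" "J$1$3 = - J$3$1" "J$1$4 = - J$4$1" "J$2$3 = - J$3$2" "J$2$4 = - J$4$2" "J$3$4 = - J$4$3"
    using TS_skew[OF T] by blast+
  have nz: "B1 J \<Longrightarrow> J$3$4 \<noteq> 0"
    using TS_nz[OF T] o by auto
  show ?thesis using nz unfolding Lc_def forall_4 B1_def B2_def B3_def o
    by (auto simp: neg_less_0_iff_less)
qed

lemma pair13:
  assumes T: "(q, J) \<in> twistor_space"
  shows "Lc q J 1 3 \<or> Lc q J 3 1 \<longleftrightarrow> B2 J \<and> q$2 = 0 \<and> q$4 = 0"
proof -
  have o: "J$1$2 = - J$2$1" "J$1$3 = - J$3$1" "J$1$4 = - J$4$1" "J$2$3 = - J$3$2" "J$2$4 = - J$4$2" "J$3$4 = - J$4$3"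
    using TS_skew[OF T] by blast+
  have nz: "B2 J \<Longrightarrow> J$1$3 \<noteq> 0"
    using TS_nz[OF T] o by auto
  show ?thesis using nz unfolding Lc_def forall_4 B1_def B2_def B3_def o
    by (auto simp: neg_less_0_iff_less)
qed

lemma pair24:
  assumes T: "(q, J) \<in> twistor_space"
  shows "Lc q J 2 4 \<or> Lc q J 4 2 \<longleftrightarrow> B2 J \<and> q$1 = 0 \<and> q$3 = 0"
proof -
  have o: "J$1$2 = - J$2$1" "J$1$3 = - J$3$1" "J$1$4 = - J$4$1" "J$2$3 = - J$3$2" "J$2$4 = - J$4$2" "J$3$4 = - J$4$3"
    using TS_skew[OF T] by blast+
  have nz: "B2 J \<Longrightarrow> J$2$4 \<noteq> 0"
    using TS_nz[OF T] o by auto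
  show ?thesis using nz unfolding Lc_def forall_4 B1_def B2_def B3_def o
    by (auto simp: neg_less_0_iff_less)
qed

lemma pair14:
  assumes T: "(q, J) \<in> twistor_space"
  shows "Lc q J 1 4 \<or> Lc q J 4 1 \<longleftrightarrow> B3 J \<and> q$2 = 0 \<and> q$3 = 0"
proof -
  have o: "J$1$2 = - J$2$1" "J$1$3 = - J$3$1" "J$1$4 = - J$4$1" "J$2$3 = - J$3$2" "J$2$4 = - J$4$2" "J$3$4 = - J$4$3"
    using TS_skew[OF T] by blast+
  have nz: "B3 J \<Longrightarrow> J$1$4 \<noteq> 0"
    using TS_nz[OF T] o by auto
  show ?thesis using nz unfolding Lc_def forall_4 B1_def B2_def B3_def o
    by (auto simp: neg_less_0_iff_less)
qed

lemma pair23: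
  assumes T: "(q, J) \<in> twistor_space"
  shows "Lc q J 2 3 \<or> Lc q J 3 2 \<longleftrightarrow> B3 J \<and> q$1 = 0 \<and> q$4 = 0"
proof -
  have o: "J$1$2 = - J$2$1" "J$1$3 = - J$3$1" "J$1$4 = - J$4$1" "J$2$3 = - J$3$2" "J$2$4 = - J$4$2" "J$3$4 = - J$4$3"
    using TS_skew[OF T] by blast+
  have nz: "B3 J \<Longrightarrow> J$2$3 \<noteq> 0"
    using TS_nz[OF T] o by auto
  show ?thesis using nz unfolding Lc_def forall_4 B1_def B2_def B3_def o
    by (auto simp: neg_less_0_iff_less)
qed

lemma twelve_iff: "(q, J) \<in> twelve_surfaces \<longleftrightarrow> (q, J) \<in> twistor_space \<and> Tc q J"
proof -
  have "(q, J) \<in> twelve_surfaces \<longleftrightarrow> (\<exists>i j. i \<noteq> j \<and> (q, J) \<in> twistor_lift (axis i 1) (axis j 1))"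
    unfolding twelve_surfaces_def by (auto split: if_splits)
  also have "\<dots> \<longleftrightarrow> (q, J) \<in> twistor_space \<and> (\<exists>i j. i \<noteq> j \<and> Lc q J i j)"
    using lift_iff unfolding Lc_def by blast
  also have "\<dots> \<longleftrightarrow> (q, J) \<in> twistor_space \<and> Tc q J"
  proof (cases "(q, J) \<in> twistor_space")
    case True
    have "(\<exists>i j. i \<noteq> j \<and> Lc q J i j) \<longleftrightarrow>
      (Lc q J 1 2 \<or> Lc q J 2 1) \<or> (Lc q J 3 4 \<or> Lc q J 4 3) \<or> (Lc q J 1 3 \<or> Lc q J 3 1) \<or>
      (Lc q J 2 4 \<or> Lc q J 4 2) \<or> (Lc q J 1 4 \<or> Lc q J 4 1) \<or> (Lc q J 2 3 \<or> Lc q J 3 2)"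
      unfolding ex_4 by auto
    also have "\<dots> \<longleftrightarrow> Tc q J"
      unfolding pair12[OF True] pair34[OF True] pair13[OF True] pair24[OF True] pair14[OF True] pair23[OF True]
        Tc_def by auto
    finally show ?thesis using True by simp
  qed simp
  finally show ?thesis .
qed
lemma skm_in_TS:
  assumes "skm a b c d e f ** skm a b c d e f = - mat 1"
    "\<And>u v. (skm a b c d e f *v u) \<bullet> (skm a b c d e f *v v) = u \<bullet> v"
    "induces_orientation (skm a b c d e f)"
  shows "(0, skm a b c d e f) \<in> twistor_space"
  using assms unfolding twistor_space_def hyp_ball_def twistor_at_def hyp_metric_def by simp

lemma TS_JJ1: "(0, skm (-1) 0 0 0 0 (-1)) \<in> twistor_space"
proof (rule skm_in_TS)
  show "skm (-1) 0 0 0 0 (-1) ** skm (-1) 0 0 0 0 (-1) = - mat 1"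
    by (simp add: skm_def vec_eq_iff forall_4 matrix_matrix_mult_def sum_4 mat_def)
  show "(skm (-1) 0 0 0 0 (-1) *v u) \<bullet> (skm (-1) 0 0 0 0 (-1) *v v) = u \<bullet> v" for u v
    by (simp add: skm_mv inner_vec_def sum_4 algebra_simps)
  show "induces_orientation (skm (-1) 0 0 0 0 (-1))"
    unfolding induces_orientation_def
    by (rule exI[of _ "axis 1 1"], rule exI[of _ "axis 3 1"]) (simp add: det_4 cols4_nth skm_mv axis_def)
qed

lemma TS_mJJ1: "(0, skm 1 0 0 0 0 1) \<in> twistor_space"
proof (rule skm_in_TS)
  show "skm 1 0 0 0 0 1 ** skm 1 0 0 0 0 1 = - mat 1"
    by (simp add: skm_def vec_eq_iff forall_4 matrix_matrix_mult_def sum_4 mat_def)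
  show "(skm 1 0 0 0 0 1 *v u) \<bullet> (skm 1 0 0 0 0 1 *v v) = u \<bullet> v" for u v
    by (simp add: skm_mv inner_vec_def sum_4 algebra_simps)
  show "induces_orientation (skm 1 0 0 0 0 1)"
    unfolding induces_orientation_def
    by (rule exI[of _ "axis 1 1"], rule exI[of _ "axis 3 1"]) (simp add: det_4 cols4_nth skm_mv axis_def)
qed

lemma TS_JJ2: "(0, skm 0 (-1) 0 0 1 0) \<in> twistor_space"
proof (rule skm_in_TS)
  show "skm 0 (-1) 0 0 1 0 ** skm 0 (-1) 0 0 1 0 = - mat 1"
    by (simp add: skm_def vec_eq_iff forall_4 matrix_matrix_mult_def sum_4 mat_def)
  show "(skm 0 (-1) 0 0 1 0 *v u) \<bullet> (skm 0 (-1) 0 0 1 0 *v v) = u \<bullet> v" for u v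
    by (simp add: skm_mv inner_vec_def sum_4 algebra_simps)
  show "induces_orientation (skm 0 (-1) 0 0 1 0)"
    unfolding induces_orientation_def
    by (rule exI[of _ "axis 1 1"], rule exI[of _ "axis 4 1"]) (simp add: det_4 cols4_nth skm_mv axis_def)
qed

lemma TS_mJJ2: "(0, skm 0 1 0 0 (-1) 0) \<in> twistor_space"
proof (rule skm_in_TS)
  show "skm 0 1 0 0 (-1) 0 ** skm 0 1 0 0 (-1) 0 = - mat 1"
    by (simp add: skm_def vec_eq_iff forall_4 matrix_matrix_mult_def sum_4 mat_def)
  show "(skm 0 1 0 0 (-1) 0 *v u) \<bullet> (skm 0 1 0 0 (-1) 0 *v v) = u \<bullet> v" for u v
    by (simp add: skm_mv inner_vec_def sum_4 algebra_simps)
  show "induces_orientation (skm 0 1 0 0 (-1) 0)"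
    unfolding induces_orientation_def
    by (rule exI[of _ "axis 1 1"], rule exI[of _ "axis 4 1"]) (simp add: det_4 cols4_nth skm_mv axis_def)
qed

lemma TS_JJ3: "(0, skm 0 0 (-1) (-1) 0 0) \<in> twistor_space"
proof (rule skm_in_TS)
  show "skm 0 0 (-1) (-1) 0 0 ** skm 0 0 (-1) (-1) 0 0 = - mat 1"
    by (simp add: skm_def vec_eq_iff forall_4 matrix_matrix_mult_def sum_4 mat_def)
  show "(skm 0 0 (-1) (-1) 0 0 *v u) \<bullet> (skm 0 0 (-1) (-1) 0 0 *v v) = u \<bullet> v" for u v
    by (simp add: skm_mv inner_vec_def sum_4 algebra_simps)
  show "induces_orientation (skm 0 0 (-1) (-1) 0 0)"
    unfolding induces_orientation_def
    by (rule exI[of _ "axis 1 1"], rule exI[of _ "axis 2 1"]) (simp add: det_4 cols4_nth skm_mv axis_def)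
qed

lemma TS_mJJ3: "(0, skm 0 0 1 1 0 0) \<in> twistor_space"
proof (rule skm_in_TS)
  show "skm 0 0 1 1 0 0 ** skm 0 0 1 1 0 0 = - mat 1"
    by (simp add: skm_def vec_eq_iff forall_4 matrix_matrix_mult_def sum_4 mat_def)
  show "(skm 0 0 1 1 0 0 *v u) \<bullet> (skm 0 0 1 1 0 0 *v v) = u \<bullet> v" for u v
    by (simp add: skm_mv inner_vec_def sum_4 algebra_simps)
  show "induces_orientation (skm 0 0 1 1 0 0)"
    unfolding induces_orientation_def
    by (rule exI[of _ "axis 1 1"], rule exI[of _ "axis 2 1"]) (simp add: det_4 cols4_nth skm_mv axis_def)
qed

lemma conj_skm: "dg s ** skm a b c d e f ** dg s =
  skm (s 1 * a * s 2) (s 1 * b * s 3) (s 1 * c * s 4) (s 2 * d * s 3) (s 2 * e * s 4) (s 3 * f * s 4)"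
  by (simp add: dg_conj skm_def vec_eq_iff forall_4)

lemma orbit_eq: "orbit (0, J) = (\<lambda>s. (0, dg s ** J ** dg s)) ` set SL"
proof -
  have "orbit (0, J) = (\<lambda>s. twistor_act (dg s) (0, J)) ` set SL"
    unfolding orbit_def sign_group_SL by auto
  also have "\<dots> = (\<lambda>s. (0, dg s ** J ** dg s)) ` set SL"
    by (rule image_cong) (simp_all add: twistor_act_def dg_inv dg_mv vec_eq_iff)
  finally show ?thesis .
qed

lemma orbit1: "orbit (0, JJ1) = {(0, JJ1), (0, - JJ1)}"
  unfolding orbit_eq JJ1_def skm_neg conj_skm SL_def by auto
lemma orbit2: "orbit (0, JJ2) = {(0, JJ2), (0, - JJ2)}"
  unfolding orbit_eq JJ2_def skm_neg conj_skm SL_def by auto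
lemma orbit3: "orbit (0, JJ3) = {(0, JJ3), (0, - JJ3)}"
  unfolding orbit_eq JJ3_def skm_neg conj_skm SL_def by auto

lemma mat1_stab: "mat 1 \<in> stabilizer (q, J)"
proof -
  have "dg (mk 1 1 1 1) = mat 1" by (simp add: dg_def mat_def vec_eq_iff mk_def)
  moreover have "mk 1 1 1 1 \<in> set SL" by (simp add: SL_def)
  moreover have "stabcond (mk 1 1 1 1) q J" by (simp add: stabcond_def mk_def)
  ultimately show ?thesis unfolding stab_eq by force
qed

lemma stab_one: "stabilizer (q, J) \<noteq> {mat 1} \<longleftrightarrow> card (stabilizer (q, J)) \<noteq> 1"
proof
  assume "stabilizer (q, J) \<noteq> {mat 1}"
  then show "card (stabilizer (q, J)) \<noteq> 1"
    using mat1_stab[of q J] by (metis card_1_singletonE singletonD)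
qed auto

lemma q0_iff: "(q::real^4) = 0 \<longleftrightarrow> q$1 = 0 \<and> q$2 = 0 \<and> q$3 = 0 \<and> q$4 = 0"
  by (simp add: vec_eq_iff forall_4)

lemma card_facts:
  assumes T: "(q, J) \<in> twistor_space"
  shows "card (stabilizer (q, J)) = 4 \<longleftrightarrow> q = 0 \<and> (B1 J \<or> B2 J \<or> B3 J)"
    "card (stabilizer (q, J)) = 1 \<longleftrightarrow> \<not> (q = 0 \<or> Tc q J)"
    "card (stabilizer (q, J)) = 1 \<or> card (stabilizer (q, J)) = 2 \<or> card (stabilizer (q, J)) = 4"
  using TS_one_B[OF T] unfolding card_stab q0_iff Tc_def
  by (auto split: if_splits)

lemma B_JJ: "B1 JJ1" "B1 (- JJ1)" "B2 JJ2" "B2 (- JJ2)" "B3 JJ3" "B3 (- JJ3)"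
  by (simp_all add: JJ1_def JJ2_def JJ3_def skm_neg B1_def B2_def B3_def skm_def)

lemma TS_JJ: "(0, JJ1) \<in> twistor_space" "(0, - JJ1) \<in> twistor_space"
  "(0, JJ2) \<in> twistor_space" "(0, - JJ2) \<in> twistor_space"
  "(0, JJ3) \<in> twistor_space" "(0, - JJ3) \<in> twistor_space"
  unfolding JJ1_def JJ2_def JJ3_def skm_neg
  using TS_JJ1 TS_mJJ1 TS_JJ2 TS_mJJ2 TS_JJ3 TS_mJJ3 by simp_all

theorem lemma2p1:
  shows "(\<exists>J1 J2 J3.
            {z \<in> twistor_space. card (stabilizer z) = 4}
              = {(0, J1), (0, -J1), (0, J2), (0, -J2), (0, J3), (0, -J3)}
          \<and> card {(0::real^4, J1), (0, -J1), (0, J2), (0, -J2), (0, J3), (0, -J3)} = 6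
          \<and> {(0::real^4, J1), (0, -J1), (0, J2), (0, -J2), (0, J3), (0, -J3)} \<subseteq> twistor_fibre 0
          \<and> J1 \<bullet> J2 = 0 \<and> J1 \<bullet> J3 = 0 \<and> J2 \<bullet> J3 = 0
          \<and> orbit (0, J1) = {(0, J1), (0, -J1)}
          \<and> orbit (0, J2) = {(0, J2), (0, -J2)}
          \<and> orbit (0, J3) = {(0, J3), (0, -J3)})
       \<and> (\<forall>z \<in> twistor_space. stabilizer z \<noteq> {mat 1} \<and> card (stabilizer z) \<noteq> 4
            \<longrightarrow> card (stabilizer z) = 2)
       \<and> {z \<in> twistor_space. stabilizer z \<noteq> {mat 1} \<and> card (stabilizer z) \<noteq> 4}
           = (twistor_fibre 0 \<union> twelve_surfaces) - {z \<in> twistor_space. card (stabilizer z) = 4}"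
proof (intro conjI)
  let ?S = "{(0::real^4, JJ1), (0, -JJ1), (0, JJ2), (0, -JJ2), (0, JJ3), (0, -JJ3)}"
  have C4: "{z \<in> twistor_space. card (stabilizer z) = 4} = ?S"
  proof (intro set_eqI iffI)
    fix z assume "z \<in> {z \<in> twistor_space. card (stabilizer z) = 4}"
    then obtain q J where z: "z = (q, J)" "(q, J) \<in> twistor_space" "card (stabilizer (q, J)) = 4"
      by (cases z) auto
    then have "q = 0" "B1 J \<or> B2 J \<or> B3 J" using card_facts(1)[OF z(2)] by auto
    then show "z \<in> ?S" using class1[OF z(2)] class2[OF z(2)] class3[OF z(2)] z(1) by auto
  next
    fix z assume "z \<in> ?S"
    then show "z \<in> {z \<in> twistor_space. card (stabilizer z) = 4}"
      using TS_JJ B_JJ card_facts(1) by auto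
  qed
  show "\<exists>J1 J2 J3.
            {z \<in> twistor_space. card (stabilizer z) = 4}
              = {(0, J1), (0, -J1), (0, J2), (0, -J2), (0, J3), (0, -J3)}
          \<and> card {(0::real^4, J1), (0, -J1), (0, J2), (0, -J2), (0, J3), (0, -J3)} = 6
          \<and> {(0::real^4, J1), (0, -J1), (0, J2), (0, -J2), (0, J3), (0, -J3)} \<subseteq> twistor_fibre 0
          \<and> J1 \<bullet> J2 = 0 \<and> J1 \<bullet> J3 = 0 \<and> J2 \<bullet> J3 = 0
          \<and> orbit (0, J1) = {(0, J1), (0, -J1)}
          \<and> orbit (0, J2) = {(0, J2), (0, -J2)}
          \<and> orbit (0, J3) = {(0, J3), (0, -J3)}"
  proof (intro exI conjI)
    show "{z \<in> twistor_space. card (stabilizer z) = 4} = ?S" by (rule C4)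
    show "card ?S = 6"
      by (simp add: JJ1_def JJ2_def JJ3_def skm_neg skm_eq)
    show "?S \<subseteq> twistor_fibre 0"
      using TS_JJ by (simp add: twistor_fibre_def twistor_proj_def)
    show "JJ1 \<bullet> JJ2 = 0" "JJ1 \<bullet> JJ3 = 0" "JJ2 \<bullet> JJ3 = 0"
      by (simp_all add: JJ1_def JJ2_def JJ3_def inner_vec_def sum_4 skm_def)
  qed (rule orbit1 orbit2 orbit3)+
  show "\<forall>z \<in> twistor_space. stabilizer z \<noteq> {mat 1} \<and> card (stabilizer z) \<noteq> 4
            \<longrightarrow> card (stabilizer z) = 2"
  proof (intro ballI impI)
    fix z assume "z \<in> twistor_space" "stabilizer z \<noteq> {mat 1} \<and> card (stabilizer z) \<noteq> 4"
    then show "card (stabilizer z) = 2"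
      using card_facts(3) stab_one by (cases z) fastforce
  qed
  show "{z \<in> twistor_space. stabilizer z \<noteq> {mat 1} \<and> card (stabilizer z) \<noteq> 4}
           = (twistor_fibre 0 \<union> twelve_surfaces) - {z \<in> twistor_space. card (stabilizer z) = 4}"
  proof (intro set_eqI)
    fix z :: "(real^4) \<times> (real^4^4)"
    obtain q J where z: "z = (q, J)" by (cases z)
    show "z \<in> {z \<in> twistor_space. stabilizer z \<noteq> {mat 1} \<and> card (stabilizer z) \<noteq> 4} \<longleftrightarrow>
      z \<in> (twistor_fibre 0 \<union> twelve_surfaces) - {z \<in> twistor_space. card (stabilizer z) = 4}"
    proof (cases "(q, J) \<in> twistor_space")
      case True
      show ?thesis unfolding z using card_facts[OF True] stab_one[of q J] twelve_iff[of q J] True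
        by (auto simp: twistor_fibre_def twistor_proj_def Tc_def)
    next
      case False
      then show ?thesis unfolding z using twelve_iff[of q J]
        by (auto simp: twistor_fibre_def twistor_proj_def)
    qed
  qed
qed
end
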